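(* Let $C$ be a Pauli-Square-Root Clifford and $P$ a Pauli, both acting on the same $t$ qubits. Then there is a $t$-qubit Pauli $Q$ such that $$C(C)\,(I\otimes P)=C(Q)\,(I\otimes P)\,C(C),$$ where the first tensor factor is a single control qubit; moreover $Q$ either commutes or anticommutes with $C$, and $\mathrm{Supp}(Q)\subseteq\mathrm{Supp}(C)$.
   Context: Paulis are tensor products of $I,X,Y,Z$ times a phase in $\{\pm1,\pm i\}$; a Clifford is a unitary mapping Paulis to Paulis under conjugation. A Pauli-Square-Root Clifford (PSC) is a Clifford that is not a Pauli and whose square is a Pauli. For a unitary $U$ on $t$ qubits, $C(U)=|0\rangle\langle0|\otimes I+|1\rangle\langle1|\otimes U$ on $1+t$ qubits (control first). $\mathrm{Supp}(W)$ denotes the set of qubits on which an operator $W$ acts nontrivially. *)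

theory Defs
  imports Complex_Main "Jordan_Normal_Form.Matrix"
begin

text \<open>Operators on t qubits are complex 2^t x 2^t matrices. Basis index r < 2^t;
  the state of qubit j in basis index r is bit j of r.\<close>

definition qbit :: "nat \<Rightarrow> nat \<Rightarrow> nat" where
  "qbit j r = (r div 2 ^ j) mod 2"

definition adj :: "complex mat \<Rightarrow> complex mat" where
  "adj M = mat (dim_col M) (dim_row M) (\<lambda>(i, j). cnj (M $$ (j, i)))"

definition unitary_op :: "nat \<Rightarrow> complex mat \<Rightarrow> bool" where
  "unitary_op t U \<longleftrightarrow> U \<in> carrier_mat (2 ^ t) (2 ^ t) \<and> U * adj U = 1\<^sub>m (2 ^ t)
      \<and> adj U * U = 1\<^sub>m (2 ^ t)"

text \<open>Single-qubit Pauli matrices: 0 = I, 1 = X, 2 = Y, 3 = Z; entries (a,b).\<close>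
definition pauli1 :: "nat \<Rightarrow> nat \<Rightarrow> nat \<Rightarrow> complex" where
  "pauli1 k a b =
     (if k = 0 then (if a = b then 1 else 0)
      else if k = 1 then (if a \<noteq> b then 1 else 0)
      else if k = 2 then (if a = 0 \<and> b = 1 then - \<i> else if a = 1 \<and> b = 0 then \<i> else 0)
      else (if a = b then (if a = 0 then 1 else -1) else 0))"

text \<open>Tensor product of single-qubit Paulis p 0, ..., p (t-1).\<close>
definition pauli_string :: "nat \<Rightarrow> (nat \<Rightarrow> nat) \<Rightarrow> complex mat" where
  "pauli_string t p = mat (2 ^ t) (2 ^ t)
      (\<lambda>(r, c). \<Prod>j<t. pauli1 (p j) (qbit j r) (qbit j c))"

definition is_pauli :: "nat \<Rightarrow> complex mat \<Rightarrow> bool" where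
  "is_pauli t M \<longleftrightarrow> (\<exists>c p. c \<in> {1, -1, \<i>, - \<i>} \<and> (\<forall>j<t. p j < 4) \<and>
      M = c \<cdot>\<^sub>m pauli_string t p)"

definition is_clifford :: "nat \<Rightarrow> complex mat \<Rightarrow> bool" where
  "is_clifford t U \<longleftrightarrow> unitary_op t U \<and>
      (\<forall>P. is_pauli t P \<longrightarrow> is_pauli t (U * P * adj U))"

definition is_PSC :: "nat \<Rightarrow> complex mat \<Rightarrow> bool" where
  "is_PSC t C \<longleftrightarrow> is_clifford t C \<and> \<not> is_pauli t C \<and> is_pauli t (C * C)"

text \<open>Controlled unitary on 1+t qubits, control qubit first (most significant):
  C(U) = |0><0| (x) I + |1><1| (x) U.\<close>
definition ctrl :: "nat \<Rightarrow> complex mat \<Rightarrow> complex mat" where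
  "ctrl t U = four_block_mat (1\<^sub>m (2 ^ t)) (0\<^sub>m (2 ^ t) (2 ^ t)) (0\<^sub>m (2 ^ t) (2 ^ t)) U"

text \<open>I (x) W on 1+t qubits, identity on the control qubit.\<close>
definition id_tensor :: "nat \<Rightarrow> complex mat \<Rightarrow> complex mat" where
  "id_tensor t W = four_block_mat W (0\<^sub>m (2 ^ t) (2 ^ t)) (0\<^sub>m (2 ^ t) (2 ^ t)) W"

definition del_bit :: "nat \<Rightarrow> nat \<Rightarrow> nat" where
  "del_bit j r = (r div 2 ^ (j + 1)) * 2 ^ j + r mod 2 ^ j"

text \<open>W' on the other t-1 qubits, tensored with identity on qubit j.\<close>
definition tensor_id_at :: "nat \<Rightarrow> nat \<Rightarrow> complex mat \<Rightarrow> complex mat" where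
  "tensor_id_at t j W' = mat (2 ^ t) (2 ^ t)
      (\<lambda>(r, c). if qbit j r = qbit j c then W' $$ (del_bit j r, del_bit j c) else 0)"

definition acts_trivially_on :: "nat \<Rightarrow> nat \<Rightarrow> complex mat \<Rightarrow> bool" where
  "acts_trivially_on t j W \<longleftrightarrow>
     (\<exists>W' \<in> carrier_mat (2 ^ (t - 1)) (2 ^ (t - 1)). W = tensor_id_at t j W')"

definition Supp :: "nat \<Rightarrow> complex mat \<Rightarrow> nat set" where
  "Supp t W = {j. j < t \<and> \<not> acts_trivially_on t j W}"

end

theory Submission
  imports Defs
begin


lemma qbit_lt2: "qbit j r < 2" by (simp add: qbit_def)

lemma qbit_bit: "qbit j r = (if bit r j then 1 else 0)"
  by (simp add: qbit_def bit_iff_odd odd_iff_mod_2_eq_one) 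

lemma qbit_0: "qbit 0 r = r mod 2" by (simp add: qbit_def)
lemma qbit_Suc: "qbit (Suc j) r = qbit j (r div 2)"
  by (simp add: qbit_def div_mult2_eq)

lemma sum_bits:
  fixes f :: "nat \<Rightarrow> nat \<Rightarrow> 'a::comm_ring_1"
  shows "(\<Sum>k<2^t. \<Prod>j<t. f j (qbit j k)) = (\<Prod>j<t. f j 0 + f j 1)"
proof (induction t arbitrary: f)
  case 0
  then show ?case by simp
next
  case (Suc t)
  have split: "(\<Sum>k<2*n. g k) = (\<Sum>m<n. g (2*m) + g (2*m+1))" for n and g :: "nat \<Rightarrow> 'a"
    by (induction n) (auto simp: algebra_simps)
  have "(\<Sum>k<2^Suc t. \<Prod>j<Suc t. f j (qbit j k))
      = (\<Sum>k<2*2^t. f 0 (k mod 2) * (\<Prod>j<t. f (Suc j) (qbit j (k div 2))))"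
    by (simp only: prod.lessThan_Suc_shift qbit_0 qbit_Suc power_Suc)
  also have "\<dots> = (\<Sum>m<2^t. (f 0 0 + f 0 1) * (\<Prod>j<t. f (Suc j) (qbit j m)))"
    using split[where n="2^t" and g="\<lambda>k. f 0 (k mod 2) * (\<Prod>j<t. f (Suc j) (qbit j (k div 2)))"]
    by (simp add: algebra_simps odd_two_times_div_two_nat mod_Suc)
  also have "\<dots> = (f 0 0 + f 0 1) * (\<Prod>j<t. f (Suc j) 0 + f (Suc j) 1)"
    using Suc.IH[of "\<lambda>j. f (Suc j)"] by (simp add: sum_distrib_left[symmetric])
  also have "\<dots> = (\<Prod>j<Suc t. f j 0 + f j 1)"
    by (simp only: prod.lessThan_Suc_shift)
  finally show ?case .
qed

lemma bits_eq: "(\<forall>i. qbit i r = qbit i c) \<Longrightarrow> r = c"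
  by (rule bit_eqI) (metis qbit_bit zero_neq_one)

lemma bits_eq_lt: assumes "r < 2^t" "c < 2^t" "\<forall>i<t. qbit i r = qbit i c" shows "r = c"
proof -
  have "qbit i r = qbit i c" for i
  proof (cases "i < t")
    case False
    then have "r div 2^i = 0" "c div 2^i = 0" using assms
      by (meson div_less less_le_trans not_less power_increasing_iff one_less_numeral_iff semiring_norm(76))+
    then show ?thesis by (simp add: qbit_def)
  qed (use assms in auto)
  then show ?thesis using bits_eq by blast
qed

lemma qbit_flip: "qbit i (flip_bit j r) = (if i = j then 1 - qbit j r else qbit i r)"
  by (simp add: qbit_bit bit_flip_bit_iff)

lemma flip_lt: assumes "j < t" "(r::nat) < 2^t" shows "flip_bit j r < 2^t"
proof -
  have "take_bit t r = r" using assms by (simp add: take_bit_nat_eq_self_iff)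
  then have "flip_bit j r = take_bit t (flip_bit j r)" using assms
    by (simp add: take_bit_flip_bit_eq)
  then show ?thesis by (metis take_bit_nat_less_exp)
qed

lemma flip_arith: "flip_bit j (r::nat) = (if qbit j r = 0 then r + 2^j else r - 2^j)"
proof (cases "bit r j")
  case True
  have "set_bit j (unset_bit j r) = r" using True
    by (intro bit_eqI) (auto simp: bit_set_bit_iff bit_unset_bit_iff)
  moreover have "set_bit j (unset_bit j r) = unset_bit j r + 2^j"
    using set_bit_eq[of j "unset_bit j r"] by (simp add: bit_unset_bit_iff)
  ultimately show ?thesis using True by (simp add: flip_bit_eq_if qbit_bit)
next
  case False
  then show ?thesis using set_bit_eq[of j r] by (simp add: flip_bit_eq_if qbit_bit)
qed



lemma smult_smult_mat: "a \<cdot>\<^sub>m (b \<cdot>\<^sub>m A) = (a * b) \<cdot>\<^sub>m (A :: 'a::comm_ring_1 mat)"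
  by (rule eq_matI) auto

definition pidx :: "nat \<Rightarrow> nat \<Rightarrow> nat" where
  "pidx a b = (if a = 0 then b else if b = 0 then a else if a = b then 0 else 6 - a - b)"

definition ph :: "nat \<Rightarrow> nat \<Rightarrow> complex" where
  "ph a b = (if a = 0 \<or> b = 0 \<or> a = b then 1
     else if (a = 1 \<and> b = 2) \<or> (a = 2 \<and> b = 3) \<or> (a = 3 \<and> b = 1) then \<i> else - \<i>)"

definition phs :: "complex set" where "phs = {1, -1, \<i>, - \<i>}"

lemma four_cases: "(a::nat) < 4 \<Longrightarrow> a = 0 \<or> a = 1 \<or> a = 2 \<or> a = 3" by auto
lemma two_cases: "(a::nat) < 2 \<Longrightarrow> a = 0 \<or> a = 1" by auto

lemma pidx_lt: "a < 4 \<Longrightarrow> b < 4 \<Longrightarrow> pidx a b < 4"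
  using four_cases[of a] four_cases[of b] by (auto simp: pidx_def)

lemma p1mul: assumes "a < 4" "b < 4" "x < 2" "y < 2"
  shows "pauli1 a x 0 * pauli1 b 0 y + pauli1 a x 1 * pauli1 b 1 y = ph a b * pauli1 (pidx a b) x y"
  using four_cases[OF assms(1)] four_cases[OF assms(2)] two_cases[OF assms(3)] two_cases[OF assms(4)]
  by (elim disjE; simp add: pauli1_def ph_def pidx_def)

lemma ph_in: "ph a b \<in> phs" by (auto simp: ph_def phs_def)

lemma phs_mult: "a \<in> phs \<Longrightarrow> b \<in> phs \<Longrightarrow> a * b \<in> phs"
  by (auto simp: phs_def)

lemma phs_prod: "(\<And>j. j < (t::nat) \<Longrightarrow> f j \<in> phs) \<Longrightarrow> (\<Prod>j<t. f j) \<in> phs"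
  by (induction t) (auto simp: phs_mult, simp add: phs_def)

lemma phs_cnj: "a \<in> phs \<Longrightarrow> cnj a * a = 1" by (auto simp: phs_def)
lemma phs_cnj_in: "a \<in> phs \<Longrightarrow> cnj a \<in> phs" by (auto simp: phs_def)
lemma phs_cnj_sign: "a \<in> phs \<Longrightarrow> cnj a = a \<or> cnj a = - a" by (auto simp: phs_def)

lemma is_pauli_alt: "is_pauli t M \<longleftrightarrow> (\<exists>c p. c \<in> phs \<and> (\<forall>j<t. p j < 4) \<and> M = c \<cdot>\<^sub>m pauli_string t p)"
  by (simp add: is_pauli_def phs_def)

lemma ps_carrier[simp]: "pauli_string t p \<in> carrier_mat (2^t) (2^t)"
  by (simp add: pauli_string_def)
lemma ps_dims[simp]: "dim_row (pauli_string t p) = 2^t" "dim_col (pauli_string t p) = 2^t"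
  by (simp_all add: pauli_string_def)

lemma ps_mult: assumes "\<forall>j<t. p j < 4" "\<forall>j<t. q j < 4"
  shows "pauli_string t p * pauli_string t q
     = (\<Prod>j<t. ph (p j) (q j)) \<cdot>\<^sub>m pauli_string t (\<lambda>j. pidx (p j) (q j))"
proof (rule eq_matI)
  fix r c assume r: "r < dim_row ((\<Prod>j<t. ph (p j) (q j)) \<cdot>\<^sub>m pauli_string t (\<lambda>j. pidx (p j) (q j)))"
    and c: "c < dim_col ((\<Prod>j<t. ph (p j) (q j)) \<cdot>\<^sub>m pauli_string t (\<lambda>j. pidx (p j) (q j)))"
  then have r': "r < 2^t" and c': "c < 2^t" by auto
  define f where "f j b = pauli1 (p j) (qbit j r) b * pauli1 (q j) b (qbit j c)" for j b
  have "(pauli_string t p * pauli_string t q) $$ (r, c)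
      = (\<Sum>k<2^t. (\<Prod>j<t. pauli1 (p j) (qbit j r) (qbit j k)) * (\<Prod>j<t. pauli1 (q j) (qbit j k) (qbit j c)))"
    using r' c' by (simp add: scalar_prod_def pauli_string_def lessThan_atLeast0 row_def col_def)
  also have "\<dots> = (\<Sum>k<2^t. \<Prod>j<t. f j (qbit j k))"
    by (simp add: f_def prod.distrib)
  also have "\<dots> = (\<Prod>j<t. f j 0 + f j 1)" by (rule sum_bits)
  also have "\<dots> = (\<Prod>j<t. ph (p j) (q j) * pauli1 (pidx (p j) (q j)) (qbit j r) (qbit j c))"
  proof (intro prod.cong refl)
    fix j assume "j \<in> {..<t}"
    then show "f j 0 + f j 1 = ph (p j) (q j) * pauli1 (pidx (p j) (q j)) (qbit j r) (qbit j c)"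
      unfolding f_def using assms by (intro p1mul) (auto simp: qbit_lt2)
  qed
  also have "\<dots> = ((\<Prod>j<t. ph (p j) (q j)) \<cdot>\<^sub>m pauli_string t (\<lambda>j. pidx (p j) (q j))) $$ (r, c)"
    using r' c' by (simp add: pauli_string_def prod.distrib)
  finally show "(pauli_string t p * pauli_string t q) $$ (r, c) = ((\<Prod>j<t. ph (p j) (q j)) \<cdot>\<^sub>m pauli_string t (\<lambda>j. pidx (p j) (q j))) $$ (r, c)" .
qed auto

lemma ps_mult_comm: assumes "\<forall>j<t. p j < 4" "\<forall>j<t. q j < 4"
  shows "\<exists>s \<in> {1, -1}. pauli_string t p * pauli_string t q = s \<cdot>\<^sub>m (pauli_string t q * pauli_string t p)"
proof -
  have e: "\<exists>e \<in> {1,-1}. ph (p j) (q j) = e * ph (q j) (p j)" if "j < t" for j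
    using four_cases[of "p j"] four_cases[of "q j"] assms that by (auto simp: ph_def)
  obtain e where e: "\<And>j. j < t \<Longrightarrow> e j \<in> {1,-1} \<and> ph (p j) (q j) = e j * ph (q j) (p j)"
    using e by metis
  have pid: "pidx (q j) (p j) = pidx (p j) (q j)" for j by (auto simp: pidx_def)
  have "\<forall>j<t. e j \<in> {1,-1}" using e by blast
  then have se: "(\<Prod>j<t. e j) \<in> {1, -1}"
  proof (induction t)
    case (Suc t)
    then have "e t \<in> {1,-1}" "(\<Prod>j<t. e j) \<in> {1, -1}" by auto
    then show ?case by auto
  qed simp
  have "pauli_string t p * pauli_string t q = (\<Prod>j<t. e j * ph (q j) (p j)) \<cdot>\<^sub>m pauli_string t (\<lambda>j. pidx (q j) (p j))"
  proof -
    have "(\<Prod>j<t. ph (p j) (q j)) = (\<Prod>j<t. e j * ph (q j) (p j))"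
      using e by (intro prod.cong) auto
    then show ?thesis using ps_mult[OF assms] pid by simp
  qed
  also have "\<dots> = (\<Prod>j<t. e j) \<cdot>\<^sub>m (pauli_string t q * pauli_string t p)"
    using ps_mult[OF assms(2,1)] by (simp add: prod.distrib smult_smult_mat)
  finally show ?thesis using se by blast
qed



lemma one_smult_mat[simp]: "(1::'a::comm_ring_1) \<cdot>\<^sub>m A = A"
  by (rule eq_matI) auto

lemma smult_mult2: assumes "A \<in> carrier_mat n k" "B \<in> carrier_mat k m"
  shows "(a \<cdot>\<^sub>m A) * (b \<cdot>\<^sub>m B) = (a * b) \<cdot>\<^sub>m (A * (B :: 'a::comm_ring_1 mat))"
proof -
  have "(a \<cdot>\<^sub>m A) * (b \<cdot>\<^sub>m B) = a \<cdot>\<^sub>m (A * (b \<cdot>\<^sub>m B))"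
    using assms by (intro mult_smult_assoc_mat) auto
  also have "\<dots> = a \<cdot>\<^sub>m (b \<cdot>\<^sub>m (A * B))"
    using assms by (subst mult_smult_distrib) auto
  finally show ?thesis by (simp add: smult_smult_mat)
qed

lemma adj_dims[simp]: "dim_row (adj A) = dim_col A" "dim_col (adj A) = dim_row A"
  by (simp_all add: adj_def)
lemma adj_carrier[simp]: "A \<in> carrier_mat n m \<Longrightarrow> adj A \<in> carrier_mat m n"
  by (metis adj_dims carrier_matD carrier_matI)
lemma adj_index[simp]: "i < dim_col A \<Longrightarrow> j < dim_row A \<Longrightarrow> adj A $$ (i, j) = cnj (A $$ (j, i))"
  by (simp add: adj_def)

lemma adj_adj[simp]: "adj (adj A) = A"
  by (rule eq_matI) auto

lemma adj_smult: "adj (c \<cdot>\<^sub>m A) = cnj c \<cdot>\<^sub>m adj A"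
  by (rule eq_matI) auto

lemma adj_mult: assumes "A \<in> carrier_mat n k" "B \<in> carrier_mat k m"
  shows "adj (A * B) = adj B * adj A"
  using assms by (intro eq_matI) (auto simp: scalar_prod_def row_def col_def mult.commute)

lemma pauli1_cnj: "k < 4 \<Longrightarrow> a < 2 \<Longrightarrow> b < 2 \<Longrightarrow> cnj (pauli1 k b a) = pauli1 k a b"
  using four_cases[of k] two_cases[of a] two_cases[of b] by (auto simp: pauli1_def)

lemma adj_ps: assumes "\<forall>j<t. p j < 4" shows "adj (pauli_string t p) = pauli_string t p"
  using assms by (intro eq_matI) (auto simp: pauli_string_def pauli1_cnj qbit_lt2 intro!: prod.cong)

lemma prod_ind: "(\<Prod>i<(t::nat). if P i then (1::'a::comm_ring_1) else 0) = (if \<forall>i<t. P i then 1 else 0)"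
  by (induction t) (auto simp: less_Suc_eq)

lemma ps_zero: "pauli_string t (\<lambda>_. 0) = 1\<^sub>m (2^t)"
proof (rule eq_matI)
  fix r c assume "r < dim_row (1\<^sub>m (2 ^ t) :: complex mat)" "c < dim_col (1\<^sub>m (2 ^ t) :: complex mat)"
  then have rc: "r < 2^t" "c < 2^t" by auto
  have "pauli_string t (\<lambda>_. 0) $$ (r, c) = (\<Prod>i<t. if qbit i r = qbit i c then 1 else 0)"
    using rc by (simp add: pauli_string_def pauli1_def)
  also have "\<dots> = (if r = c then 1 else 0)"
    using rc bits_eq_lt[of r t c] by (simp add: prod_ind) 
  finally show "pauli_string t (\<lambda>_. 0) $$ (r, c) = 1\<^sub>m (2 ^ t) $$ (r, c)" using rc by simp
qed auto

lemma ps_sq: assumes "\<forall>j<t. p j < 4" shows "pauli_string t p * pauli_string t p = 1\<^sub>m (2^t)"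
proof -
  have "ph (p j) (p j) = 1" "pidx (p j) (p j) = 0" for j by (auto simp: ph_def pidx_def)
  then show ?thesis using ps_mult[OF assms assms] by (simp add: ps_zero)
qed

lemma pauli_carrier: "is_pauli t M \<Longrightarrow> M \<in> carrier_mat (2^t) (2^t)"
  by (auto simp: is_pauli_def)

lemma pauli_mult: assumes "is_pauli t A" "is_pauli t B" shows "is_pauli t (A * B)"
proof -
  obtain a p where a: "a \<in> phs" "\<forall>j<t. p j < 4" "A = a \<cdot>\<^sub>m pauli_string t p"
    using assms(1) by (auto simp: is_pauli_alt)
  obtain b q where b: "b \<in> phs" "\<forall>j<t. q j < 4" "B = b \<cdot>\<^sub>m pauli_string t q"
    using assms(2) by (auto simp: is_pauli_alt)
  have "A * B = (a * b) \<cdot>\<^sub>m (pauli_string t p * pauli_string t q)"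
    using a b by (simp add: smult_mult2[OF ps_carrier ps_carrier])
  also have "\<dots> = (a * b * (\<Prod>j<t. ph (p j) (q j))) \<cdot>\<^sub>m pauli_string t (\<lambda>j. pidx (p j) (q j))"
    using ps_mult[OF a(2) b(2)] by (simp add: smult_smult_mat)
  finally show ?thesis unfolding is_pauli_alt using a b pidx_lt
    by (intro exI[of _ "a * b * (\<Prod>j<t. ph (p j) (q j))"] exI[of _ "\<lambda>j. pidx (p j) (q j)"])
       (auto intro!: phs_mult phs_prod ph_in)
qed

lemma pauli_adj_sign: assumes "is_pauli t A" shows "\<exists>s\<in>{1,-1}. adj A = s \<cdot>\<^sub>m A"
proof -
  obtain a p where a: "a \<in> phs" "\<forall>j<t. p j < 4" "A = a \<cdot>\<^sub>m pauli_string t p"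
    using assms(1) by (auto simp: is_pauli_alt)
  have "adj A = cnj a \<cdot>\<^sub>m pauli_string t p" using a by (simp add: adj_smult adj_ps)
  moreover have "cnj a = a \<or> cnj a = -a" using phs_cnj_sign[OF a(1)] .
  ultimately show ?thesis using a(3)
    by (auto simp: smult_smult_mat intro: bexI[of _ 1] bexI[of _ "-1"])
qed

lemma pauli_adj: assumes "is_pauli t A" shows "is_pauli t (adj A)"
proof -
  obtain a p where a: "a \<in> phs" "\<forall>j<t. p j < 4" "A = a \<cdot>\<^sub>m pauli_string t p"
    using assms(1) by (auto simp: is_pauli_alt)
  have "adj A = cnj a \<cdot>\<^sub>m pauli_string t p" using a by (simp add: adj_smult adj_ps)
  then show ?thesis unfolding is_pauli_alt using a phs_cnj_in by blast
qed

lemma pauli_unit: assumes "is_pauli t A" shows "A * adj A = 1\<^sub>m (2^t)" "adj A * A = 1\<^sub>m (2^t)"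
proof -
  obtain a p where a: "a \<in> phs" "\<forall>j<t. p j < 4" "A = a \<cdot>\<^sub>m pauli_string t p"
    using assms(1) by (auto simp: is_pauli_alt)
  have ad: "adj A = cnj a \<cdot>\<^sub>m pauli_string t p" using a by (simp add: adj_smult adj_ps)
  have "A * adj A = (a * cnj a) \<cdot>\<^sub>m (pauli_string t p * pauli_string t p)"
    using a ad by (simp add: smult_mult2[OF ps_carrier ps_carrier])
  also have "\<dots> = 1\<^sub>m (2^t)" using phs_cnj[OF a(1)] ps_sq[OF a(2)]
    by (simp add: mult.commute)
  finally show "A * adj A = 1\<^sub>m (2^t)" .
  have "adj A * A = (cnj a * a) \<cdot>\<^sub>m (pauli_string t p * pauli_string t p)"
    using a ad by (simp add: smult_mult2[OF ps_carrier ps_carrier])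
  also have "\<dots> = 1\<^sub>m (2^t)" using phs_cnj[OF a(1)] ps_sq[OF a(2)]
    by simp
  finally show "adj A * A = 1\<^sub>m (2^t)" .
qed

lemma pauli_comm: assumes "is_pauli t A" "is_pauli t B" shows "\<exists>s\<in>{1,-1}. A * B = s \<cdot>\<^sub>m (B * A)"
proof -
  obtain a p where a: "a \<in> phs" "\<forall>j<t. p j < 4" "A = a \<cdot>\<^sub>m pauli_string t p"
    using assms(1) by (auto simp: is_pauli_alt)
  obtain b q where b: "b \<in> phs" "\<forall>j<t. q j < 4" "B = b \<cdot>\<^sub>m pauli_string t q"
    using assms(2) by (auto simp: is_pauli_alt)
  obtain s where s: "s \<in> {1,-1}" "pauli_string t p * pauli_string t q = s \<cdot>\<^sub>m (pauli_string t q * pauli_string t p)"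
    using ps_mult_comm[OF a(2) b(2)] by blast
  have "A * B = (a * b) \<cdot>\<^sub>m (pauli_string t p * pauli_string t q)"
    using a b by (simp add: smult_mult2[OF ps_carrier ps_carrier])
  moreover have "B * A = (a * b) \<cdot>\<^sub>m (pauli_string t q * pauli_string t p)"
    using a b by (simp add: smult_mult2[OF ps_carrier ps_carrier] mult.commute)
  ultimately have "A * B = s \<cdot>\<^sub>m (B * A)" using s by (simp add: smult_smult_mat mult.commute)
  then show ?thesis using s(1) by blast
qed



lemma flip_flip[simp]: "flip_bit j (flip_bit j (r::nat)) = r"
  by (rule bit_eqI) (auto simp: bit_flip_bit_iff)

lemma lin_lt: "(A::nat) < K \<Longrightarrow> L < m \<Longrightarrow> A * m + L < K * m"
proof -
  assume "A < K" "L < m"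
  then have "A * m + L < Suc A * m" by simp
  also have "\<dots> \<le> K * m" using \<open>A < K\<close> by (intro mult_le_mono1) simp
  finally show ?thesis .
qed

lemma lin_lt2: "(A::nat) * m \<le> r \<Longrightarrow> r < K * m \<Longrightarrow> A < K"
  by (metis leD le_trans mult_le_mono1 not_le_imp_less)

lemma decomp: "r = (r div 2^Suc j) * 2^Suc j + qbit j r * 2^j + r mod 2^j"
proof -
  have "r = r div 2^Suc j * 2^Suc j + r mod 2^Suc j" by (metis div_mult_mod_eq)
  moreover have "r mod 2^Suc j = 2^j * (r div 2^j mod 2) + r mod 2^j"
    by (simp only: power_Suc2 mod_mult2_eq)
  ultimately show ?thesis unfolding qbit_def by (metis add.assoc mult.commute)
qed

lemma dm0: assumes "L < (2::nat)^j" shows "(A * 2^j + L) div 2^j = A" "(A * 2^j + L) mod 2^j = L"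
  using assms by simp_all

lemma dm: assumes "L < (2::nat)^j" "b < 2"
  shows "(A * 2^Suc j + b * 2^j + L) div 2^Suc j = A"
    "(A * 2^Suc j + b * 2^j + L) mod 2^j = L"
    "qbit j (A * 2^Suc j + b * 2^j + L) = b"
proof -
  have e: "A * 2^Suc j + b * 2^j + L = (2 * A + b) * 2^j + L" by (simp add: algebra_simps)
  have d: "(A * 2^Suc j + b * 2^j + L) div 2^j = 2 * A + b" unfolding e using assms by simp
  show "(A * 2^Suc j + b * 2^j + L) mod 2^j = L" unfolding e using assms by simp
  show "qbit j (A * 2^Suc j + b * 2^j + L) = b" unfolding qbit_def d using assms by simp
  have "(A * 2^Suc j + b * 2^j + L) div 2^Suc j = (A * 2^Suc j + b * 2^j + L) div 2^j div 2"
    by (simp only: power_Suc2 div_mult2_eq)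
  then show "(A * 2^Suc j + b * 2^j + L) div 2^Suc j = A" using d assms by simp
qed

lemma del_bit_alt: "del_bit j r = (r div 2^Suc j) * 2^j + r mod 2^j"
  by (simp add: del_bit_def)

lemma del_dm: assumes "L < (2::nat)^j" "b < 2"
  shows "del_bit j (A * 2^Suc j + b * 2^j + L) = A * 2^j + L"
  using dm[OF assms] by (simp add: del_bit_alt)

lemma aux1: "(r::nat) = X + b*m + L \<Longrightarrow> b < 2 \<Longrightarrow> (if b = 0 then r + m else r - m) = X + (1-b)*m + L"
  by (cases b) auto
lemma aux2: "(r::nat) = X + b*m + L \<Longrightarrow> b < 2 \<Longrightarrow> F = X + (1-b)*m + L \<Longrightarrow> X + L = (if b = 0 then r else F)"
  by (cases b) auto

lemma flip_decomp: "flip_bit j r = (r div 2^Suc j) * 2^Suc j + (1 - qbit j r) * 2^j + r mod 2^j"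
  unfolding flip_arith by (rule aux1[OF decomp qbit_lt2])

lemma del_flip[simp]: "del_bit j (flip_bit j r) = del_bit j r"
proof -
  have "del_bit j (flip_bit j r) = (r div 2^Suc j) * 2^j + r mod 2^j"
    unfolding flip_decomp by (rule del_dm) auto
  also have "\<dots> = del_bit j r" by (simp add: del_bit_alt)
  finally show ?thesis .
qed

lemma del_lt: assumes "j < t" "r < 2^t" shows "del_bit j r < 2^(t-1)"
proof -
  have "t = (t - Suc j) + Suc j" using assms by simp
  then have tt: "2^t = 2^(t - Suc j) * (2::nat)^Suc j" by (metis power_add)
  have "(r div 2^Suc j) * 2^Suc j \<le> r" by simp
  moreover have "r < 2^(t - Suc j) * 2^Suc j" by (simp only: tt[symmetric] assms(2))
  ultimately have "r div 2^Suc j < 2^(t - Suc j)" by (rule lin_lt2)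
  then have "(r div 2^Suc j) * 2^j + r mod 2^j < 2^(t - Suc j) * 2^j" by (intro lin_lt) auto
  also have "\<dots> = 2^(t-1)"
  proof -
    have "t - 1 = (t - Suc j) + j" using assms by simp
    then show ?thesis by (metis power_add)
  qed
  finally show ?thesis by (simp add: del_bit_alt)
qed

definition ins0 :: "nat \<Rightarrow> nat \<Rightarrow> nat" where
  "ins0 j a = (a div 2^j) * 2^Suc j + a mod 2^j"

lemma ins0_alt: "ins0 j a = (a div 2^j) * 2^Suc j + 0 * 2^j + a mod 2^j"
  by (simp add: ins0_def)

lemma ins0_del: "ins0 j (del_bit j r) = (if qbit j r = 0 then r else flip_bit j r)"
proof -
  have "ins0 j (del_bit j r) = (r div 2^Suc j) * 2^Suc j + r mod 2^j"
    unfolding ins0_def del_bit_alt by (simp add: dm0)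
  also have "\<dots> = (if qbit j r = 0 then r else flip_bit j r)"
    by (rule aux2[OF decomp qbit_lt2 flip_decomp])
  finally show ?thesis .
qed

lemma ins0_lt: assumes "j < t" "a < 2^(t-1)" shows "ins0 j a < 2^t"
proof -
  have "t - 1 = (t - Suc j) + j" using assms by simp
  then have tt: "2^(t-1) = 2^(t - Suc j) * (2::nat)^j" by (metis power_add)
  have "(a div 2^j) * 2^j \<le> a" by simp
  moreover have "a < 2^(t - Suc j) * 2^j" by (simp only: tt[symmetric] assms(2))
  ultimately have "a div 2^j < 2^(t - Suc j)" by (rule lin_lt2)
  then have "(a div 2^j) * 2^Suc j + a mod 2^j < 2^(t - Suc j) * 2^Suc j"
  proof (rule lin_lt)
    show "a mod 2^j < 2^Suc j" by (rule less_le_trans[of _ "2^j"]) auto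
  qed
  also have "\<dots> = 2^t"
  proof -
    have "t = (t - Suc j) + Suc j" using assms by simp
    then show ?thesis by (metis power_add)
  qed
  finally show ?thesis by (simp add: ins0_def)
qed



definition Xj :: "nat \<Rightarrow> nat \<Rightarrow> complex mat" where
  "Xj t j = pauli_string t (\<lambda>i. if i = j then 1 else 0)"
definition Zj :: "nat \<Rightarrow> nat \<Rightarrow> complex mat" where
  "Zj t j = pauli_string t (\<lambda>i. if i = j then 3 else 0)"
definition zeta :: "nat \<Rightarrow> nat \<Rightarrow> complex" where
  "zeta j r = (if qbit j r = 0 then 1 else -1)"

lemma Xj_carrier[simp]: "Xj t j \<in> carrier_mat (2^t) (2^t)" by (simp add: Xj_def)
lemma Zj_carrier[simp]: "Zj t j \<in> carrier_mat (2^t) (2^t)" by (simp add: Zj_def)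
lemma Xj_dims[simp]: "dim_row (Xj t j) = 2^t" "dim_col (Xj t j) = 2^t" by (simp_all add: Xj_def)
lemma Zj_dims[simp]: "dim_row (Zj t j) = 2^t" "dim_col (Zj t j) = 2^t" by (simp_all add: Zj_def)
lemma Xj_p: "\<forall>i<t. (\<lambda>i. if i = j then 1 else 0) i < (4::nat)" by auto
lemma Zj_p: "\<forall>i<t. (\<lambda>i. if i = j then 3 else 0) i < (4::nat)" by auto

lemma p1_X: "a < 2 \<Longrightarrow> b < 2 \<Longrightarrow> pauli1 1 a b = (if b = 1 - a then 1 else 0)"
  using two_cases[of a] two_cases[of b] by (auto simp: pauli1_def)
lemma p1_I: "pauli1 0 a b = (if b = a then 1 else 0)"
  by (auto simp: pauli1_def)
lemma p1_Z: "a < 2 \<Longrightarrow> b < 2 \<Longrightarrow> pauli1 3 a b = (if b = a then 1 else 0) * (if a = 0 then 1 else -1)"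
  using two_cases[of a] two_cases[of b] by (auto simp: pauli1_def)

lemma Xj_idx: assumes "j < t" "r < 2^t" "c < 2^t"
  shows "Xj t j $$ (r, c) = (if c = flip_bit j r then 1 else 0)"
proof -
  have "Xj t j $$ (r, c) = (\<Prod>i<t. pauli1 (if i = j then 1 else 0) (qbit i r) (qbit i c))"
    using assms unfolding Xj_def pauli_string_def by simp
  also have "\<dots> = (\<Prod>i<t. if qbit i c = qbit i (flip_bit j r) then 1 else 0)"
  proof (rule prod.cong[OF refl])
    fix i assume "i \<in> {..<t}"
    show "pauli1 (if i = j then 1 else 0) (qbit i r) (qbit i c) = (if qbit i c = qbit i (flip_bit j r) then 1 else 0)"
    proof (cases "i = j")
      case True
      have "pauli1 1 (qbit j r) (qbit j c) = (if qbit j c = 1 - qbit j r then 1 else 0)"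
        by (rule p1_X) (simp_all add: qbit_lt2)
      then show ?thesis using True by (simp add: qbit_flip)
    next
      case False
      then show ?thesis by (simp add: p1_I qbit_flip)
    qed
  qed
  also have "\<dots> = (if c = flip_bit j r then 1 else 0)"
    using bits_eq_lt[OF assms(3) flip_lt[OF assms(1,2)]] by (auto simp: prod_ind)
  finally show ?thesis .
qed

lemma Zj_idx: assumes "j < t" "r < 2^t" "c < 2^t"
  shows "Zj t j $$ (r, c) = (if r = c then zeta j r else 0)"
proof -
  have "Zj t j $$ (r, c) = (\<Prod>i<t. pauli1 (if i = j then 3 else 0) (qbit i r) (qbit i c))"
    using assms unfolding Zj_def pauli_string_def by simp
  also have "\<dots> = (\<Prod>i<t. (if qbit i c = qbit i r then 1 else 0) * (if i = j then zeta j r else 1))"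
  proof (rule prod.cong[OF refl])
    fix i assume "i \<in> {..<t}"
    show "pauli1 (if i = j then 3 else 0) (qbit i r) (qbit i c) = (if qbit i c = qbit i r then 1 else 0) * (if i = j then zeta j r else 1)"
    proof (cases "i = j")
      case True
      then show ?thesis by (simp add: p1_Z qbit_lt2 zeta_def)
    next
      case False
      then show ?thesis by (simp add: p1_I)
    qed
  qed
  also have "\<dots> = (if \<forall>i<t. qbit i c = qbit i r then 1 else 0) * zeta j r"
    using assms(1) by (simp add: prod.distrib prod_ind prod.delta)
  also have "\<dots> = (if r = c then zeta j r else 0)"
    using bits_eq_lt[OF assms(3,2)] by auto
  finally show ?thesis .
qed

lemma mult_Xj_right: assumes "M \<in> carrier_mat (2^t) (2^t)" "j < t" "r < 2^t" "c < 2^t"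
  shows "(M * Xj t j) $$ (r, c) = M $$ (r, flip_bit j c)"
proof -
  have "(M * Xj t j) $$ (r, c) = (\<Sum>k\<in>{0..<2^t}. M $$ (r, k) * Xj t j $$ (k, c))"
    using assms by (simp add: scalar_prod_def carrier_matD)
  also have "\<dots> = (\<Sum>k\<in>{0..<2^t}. if k = flip_bit j c then M $$ (r, k) else 0)"
    using assms by (intro sum.cong refl) (auto simp: Xj_idx)
  also have "\<dots> = M $$ (r, flip_bit j c)" using flip_lt[OF assms(2,4)] by simp
  finally show ?thesis .
qed

lemma mult_Xj_left: assumes "M \<in> carrier_mat (2^t) (2^t)" "j < t" "r < 2^t" "c < 2^t"
  shows "(Xj t j * M) $$ (r, c) = M $$ (flip_bit j r, c)"
proof -
  have "(Xj t j * M) $$ (r, c) = (\<Sum>k\<in>{0..<2^t}. Xj t j $$ (r, k) * M $$ (k, c))"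
    using assms by (simp add: scalar_prod_def carrier_matD)
  also have "\<dots> = (\<Sum>k\<in>{0..<2^t}. if k = flip_bit j r then M $$ (k, c) else 0)"
    using assms by (intro sum.cong refl) (auto simp: Xj_idx)
  also have "\<dots> = M $$ (flip_bit j r, c)" using flip_lt[OF assms(2,3)] by simp
  finally show ?thesis .
qed

lemma mult_Zj_right: assumes "M \<in> carrier_mat (2^t) (2^t)" "j < t" "r < 2^t" "c < 2^t"
  shows "(M * Zj t j) $$ (r, c) = M $$ (r, c) * zeta j c"
proof -
  have "(M * Zj t j) $$ (r, c) = (\<Sum>k\<in>{0..<2^t}. M $$ (r, k) * Zj t j $$ (k, c))"
    using assms by (simp add: scalar_prod_def carrier_matD)
  also have "\<dots> = (\<Sum>k\<in>{0..<2^t}. if k = c then M $$ (r, k) * zeta j c else 0)"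
    using assms by (intro sum.cong refl) (auto simp: Zj_idx)
  also have "\<dots> = M $$ (r, c) * zeta j c" using assms by simp
  finally show ?thesis .
qed

lemma mult_Zj_left: assumes "M \<in> carrier_mat (2^t) (2^t)" "j < t" "r < 2^t" "c < 2^t"
  shows "(Zj t j * M) $$ (r, c) = zeta j r * M $$ (r, c)"
proof -
  have "(Zj t j * M) $$ (r, c) = (\<Sum>k\<in>{0..<2^t}. Zj t j $$ (r, k) * M $$ (k, c))"
    using assms by (simp add: scalar_prod_def carrier_matD)
  also have "\<dots> = (\<Sum>k\<in>{0..<2^t}. if k = r then zeta j r * M $$ (k, c) else 0)"
    using assms by (intro sum.cong refl) (auto simp: Zj_idx)
  also have "\<dots> = zeta j r * M $$ (r, c)" using assms by simp
  finally show ?thesis .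
qed



lemma tid_carrier[simp]: "tensor_id_at t j W \<in> carrier_mat (2^t) (2^t)"
  by (simp add: tensor_id_at_def)

lemma tid_dims[simp]: "dim_row (tensor_id_at t j W) = 2^t" "dim_col (tensor_id_at t j W) = 2^t"
  by (simp_all add: tensor_id_at_def)

lemma tid_idx: "r < 2^t \<Longrightarrow> c < 2^t \<Longrightarrow> tensor_id_at t j W $$ (r, c) =
   (if qbit j r = qbit j c then W $$ (del_bit j r, del_bit j c) else 0)"
  by (simp add: tensor_id_at_def)

lemma zeta_eq: "zeta j r = zeta j c \<longleftrightarrow> qbit j r = qbit j c"
  using two_cases[OF qbit_lt2[of j r]] two_cases[OF qbit_lt2[of j c]] by (auto simp: zeta_def)

lemma tid_comm: assumes "j < t"
  shows "tensor_id_at t j W * Xj t j = Xj t j * tensor_id_at t j W"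
    "tensor_id_at t j W * Zj t j = Zj t j * tensor_id_at t j W"
proof -
  let ?T = "tensor_id_at t j W"
  show "?T * Xj t j = Xj t j * ?T"
  proof (rule eq_matI)
    fix r c assume "r < dim_row (Xj t j * ?T)" "c < dim_col (Xj t j * ?T)"
    then have rc: "r < 2^t" "c < 2^t" by auto
    have "(?T * Xj t j) $$ (r, c) = ?T $$ (r, flip_bit j c)"
      by (rule mult_Xj_right[OF tid_carrier assms rc])
    also have "\<dots> = ?T $$ (flip_bit j r, c)"
      using rc flip_lt[OF assms] two_cases[OF qbit_lt2[of j r]] two_cases[OF qbit_lt2[of j c]]
      by (auto simp: tid_idx qbit_flip)
    also have "\<dots> = (Xj t j * ?T) $$ (r, c)"
      by (rule mult_Xj_left[OF tid_carrier assms rc, symmetric])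
    finally show "(?T * Xj t j) $$ (r, c) = (Xj t j * ?T) $$ (r, c)" .
  qed auto
  show "?T * Zj t j = Zj t j * ?T"
  proof (rule eq_matI)
    fix r c assume "r < dim_row (Zj t j * ?T)" "c < dim_col (Zj t j * ?T)"
    then have rc: "r < 2^t" "c < 2^t" by auto
    have "(?T * Zj t j) $$ (r, c) = ?T $$ (r, c) * zeta j c"
      by (rule mult_Zj_right[OF tid_carrier assms rc])
    also have "\<dots> = zeta j r * ?T $$ (r, c)"
      using rc zeta_eq[of j r c] by (auto simp: tid_idx)
    also have "\<dots> = (Zj t j * ?T) $$ (r, c)"
      by (rule mult_Zj_left[OF tid_carrier assms rc, symmetric])
    finally show "(?T * Zj t j) $$ (r, c) = (Zj t j * ?T) $$ (r, c)" .
  qed auto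
qed

lemma comm_triv: assumes j: "j < t" and M: "M \<in> carrier_mat (2^t) (2^t)"
  and X: "M * Xj t j = Xj t j * M" and Z: "M * Zj t j = Zj t j * M"
  shows "acts_trivially_on t j M"
proof -
  define W where "W = mat (2^(t-1)) (2^(t-1)) (\<lambda>(a, b). M $$ (ins0 j a, ins0 j b))"
  have fx: "M $$ (flip_bit j r, flip_bit j c) = M $$ (r, c)" if rc: "r < 2^t" "c < 2^t" for r c
  proof -
    have "M $$ (r, flip_bit j (flip_bit j c)) = M $$ (flip_bit j r, flip_bit j c)"
      using mult_Xj_right[OF M j rc(1) flip_lt[OF j rc(2)]] mult_Xj_left[OF M j rc(1) flip_lt[OF j rc(2)]] X
      by simp
    then show ?thesis by simp
  qed
  have z0: "M $$ (r, c) = 0" if rc: "r < 2^t" "c < 2^t" and ne: "qbit j r \<noteq> qbit j c" for r c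
  proof -
    have "(M * Zj t j) $$ (r, c) = (Zj t j * M) $$ (r, c)" using Z by simp
    then have "M $$ (r, c) * zeta j c = zeta j r * M $$ (r, c)"
      using mult_Zj_right[OF M j rc] mult_Zj_left[OF M j rc] by metis
    moreover have "zeta j r = - zeta j c"
      using ne two_cases[OF qbit_lt2[of j r]] two_cases[OF qbit_lt2[of j c]] by (auto simp: zeta_def)
    moreover have "zeta j c \<noteq> 0" by (simp add: zeta_def)
    ultimately show ?thesis by auto
  qed
  have "M = tensor_id_at t j W"
  proof (rule eq_matI)
    fix r c assume "r < dim_row (tensor_id_at t j W)" "c < dim_col (tensor_id_at t j W)"
    then have rc: "r < 2^t" "c < 2^t" by (auto simp: tensor_id_at_def)
    show "M $$ (r, c) = tensor_id_at t j W $$ (r, c)"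
    proof (cases "qbit j r = qbit j c")
      case True
      have "tensor_id_at t j W $$ (r, c) = M $$ (ins0 j (del_bit j r), ins0 j (del_bit j c))"
        using True rc del_lt[OF j] by (simp add: tid_idx W_def)
      also have "\<dots> = M $$ (r, c)"
        using True fx[OF rc] by (simp add: ins0_del)
      finally show ?thesis by simp
    next
      case False
      then show ?thesis using z0[OF rc] rc by (simp add: tid_idx)
    qed
  qed (use M in \<open>auto simp: tensor_id_at_def\<close>)
  moreover have "W \<in> carrier_mat (2^(t-1)) (2^(t-1))" by (simp add: W_def)
  ultimately show ?thesis unfolding acts_trivially_on_def by blast
qed



lemma neg_one_smult: "(-1::'a::comm_ring_1) \<cdot>\<^sub>m A = - A"
  by (rule eq_matI) auto

lemma scomm_mult: assumes A: "A \<in> carrier_mat n n" and B: "B \<in> carrier_mat n n" and X: "X \<in> carrier_mat n n"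
  and a: "A * X = s \<cdot>\<^sub>m (X * A)" and b: "B * X = s' \<cdot>\<^sub>m (X * B)"
  shows "(A * B) * X = (s * s') \<cdot>\<^sub>m (X * (A * (B :: 'a::comm_ring_1 mat)))"
proof -
  have "(A * B) * X = A * (B * X)" using A B X by simp
  also have "\<dots> = A * (s' \<cdot>\<^sub>m (X * B))" using b by simp
  also have "\<dots> = s' \<cdot>\<^sub>m ((A * X) * B)" using A B X mult_smult_distrib[OF A mult_carrier_mat[OF X B]] by simp
  also have "\<dots> = s' \<cdot>\<^sub>m ((s \<cdot>\<^sub>m (X * A)) * B)" using a by simp
  also have "\<dots> = (s * s') \<cdot>\<^sub>m (X * (A * B))" using A B X
    using mult_smult_assoc_mat[OF mult_carrier_mat[OF X A] B] by (simp add: smult_smult_mat mult.commute)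
  finally show ?thesis .
qed

lemma scomm_adj: assumes A: "A \<in> carrier_mat n n" and X: "X \<in> carrier_mat n n" and aX: "adj X = X"
  and s: "s \<in> {1, -1}" and a: "A * X = s \<cdot>\<^sub>m (X * A)"
  shows "adj A * X = s \<cdot>\<^sub>m (X * adj A)"
proof -
  have cs: "cnj s = s" "s * s = 1" using s by auto
  have "X * adj A = adj (A * X)" using A X aX by (simp add: adj_mult[of _ n n])
  also have "\<dots> = s \<cdot>\<^sub>m (adj A * X)" using a A X aX cs by (simp add: adj_smult adj_mult[of _ n n])
  finally have "s \<cdot>\<^sub>m (X * adj A) = (s * s) \<cdot>\<^sub>m (adj A * X)" by (simp add: smult_smult_mat)
  then show ?thesis using cs by simp
qed

lemma Xj_pauli: "is_pauli t (Xj t j)"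
  unfolding is_pauli_def Xj_def by (rule exI[of _ 1], rule exI[of _ "\<lambda>i. if i = j then 1 else 0"]) auto
lemma Zj_pauli: "is_pauli t (Zj t j)"
  unfolding is_pauli_def Zj_def by (rule exI[of _ 1], rule exI[of _ "\<lambda>i. if i = j then 3 else 0"]) auto
lemma Xj_adj: "adj (Xj t j) = Xj t j" unfolding Xj_def by (rule adj_ps) auto
lemma Zj_adj: "adj (Zj t j) = Zj t j" unfolding Zj_def by (rule adj_ps) auto

lemma Q_comm: assumes C: "C \<in> carrier_mat n n" and P: "P \<in> carrier_mat n n" and X: "X \<in> carrier_mat n n"
  and aX: "adj X = X" and cX: "C * X = X * C" and s: "s \<in> {1, -1}" and pX: "P * X = s \<cdot>\<^sub>m (X * P)"
  shows "(C * P * adj C * adj P) * X = X * (C * P * adj C * adj P)"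
proof -
  have c1: "C * X = 1 \<cdot>\<^sub>m (X * C)" using cX by simp
  have c2: "adj C * X = 1 \<cdot>\<^sub>m (X * adj C)" by (rule scomm_adj[OF C X aX _ c1]) simp
  have p2: "adj P * X = s \<cdot>\<^sub>m (X * adj P)" by (rule scomm_adj[OF P X aX s pX])
  have "(C * P) * X = (1 * s) \<cdot>\<^sub>m (X * (C * P))" by (rule scomm_mult[OF C P X c1 pX])
  then have "(C * P * adj C) * X = (1 * s * 1) \<cdot>\<^sub>m (X * (C * P * adj C))"
    using C P by (intro scomm_mult[OF _ _ X _ c2]) auto
  then have "(C * P * adj C * adj P) * X = (1 * s * 1 * s) \<cdot>\<^sub>m (X * (C * P * adj C * adj P))"
    using C P by (intro scomm_mult[OF _ _ X _ p2]) auto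
  moreover have "1 * s * 1 * s = 1" using s by auto
  ultimately show ?thesis by simp
qed

lemma pauli_sX: assumes "is_pauli t P" "is_pauli t X" shows "\<exists>s\<in>{1,-1}. P * X = s \<cdot>\<^sub>m (X * P)"
  using pauli_comm[OF assms] .



lemma ctrl_idt: assumes U: "U \<in> carrier_mat (2^t) (2^t)" and P: "P \<in> carrier_mat (2^t) (2^t)"
  shows "ctrl t U * id_tensor t P = four_block_mat P (0\<^sub>m (2^t) (2^t)) (0\<^sub>m (2^t) (2^t)) (U * P)"
  unfolding ctrl_def id_tensor_def
  by (subst mult_four_block_mat[OF one_carrier_mat zero_carrier_mat zero_carrier_mat U P zero_carrier_mat zero_carrier_mat P]) (use U P in auto)

lemma blk_ctrl: assumes A: "A \<in> carrier_mat (2^t) (2^t)" and B: "B \<in> carrier_mat (2^t) (2^t)"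
  and C: "C \<in> carrier_mat (2^t) (2^t)"
  shows "four_block_mat A (0\<^sub>m (2^t) (2^t)) (0\<^sub>m (2^t) (2^t)) B * ctrl t C
     = four_block_mat A (0\<^sub>m (2^t) (2^t)) (0\<^sub>m (2^t) (2^t)) (B * C)"
  unfolding ctrl_def
  by (subst mult_four_block_mat[OF A zero_carrier_mat zero_carrier_mat B one_carrier_mat zero_carrier_mat zero_carrier_mat C]) (use A B C in auto)

theorem proposition2:
  fixes t :: nat and C P :: "complex mat"
  assumes "is_PSC t C" and "is_pauli t P"
  shows "\<exists>Q. is_pauli t Q \<and>
           ctrl t C * id_tensor t P = ctrl t Q * id_tensor t P * ctrl t C \<and>
           (Q * C = C * Q \<or> Q * C = - (C * Q)) \<and>
           Supp t Q \<subseteq> Supp t C"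
proof -
  have cl: "is_clifford t C" and CC: "is_pauli t (C * C)" using assms(1) by (auto simp: is_PSC_def)
  then have u: "unitary_op t C" by (simp add: is_clifford_def)
  have Cc: "C \<in> carrier_mat (2^t) (2^t)" and CaC: "C * adj C = 1\<^sub>m (2^t)" and aCC: "adj C * C = 1\<^sub>m (2^t)"
    using u by (auto simp: unitary_op_def)
  have Pc: "P \<in> carrier_mat (2^t) (2^t)" using pauli_carrier[OF assms(2)] .
  have PaP: "P * adj P = 1\<^sub>m (2^t)" and aPP: "adj P * P = 1\<^sub>m (2^t)" using pauli_unit[OF assms(2)] by auto
  have aCc: "adj C \<in> carrier_mat (2^t) (2^t)" and aPc: "adj P \<in> carrier_mat (2^t) (2^t)" using Cc Pc by auto
  have CPC: "is_pauli t (C * P * adj C)" using cl assms(2) by (simp add: is_clifford_def)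
  define Q where "Q = C * P * adj C * adj P"
  have QP: "is_pauli t Q" unfolding Q_def by (rule pauli_mult[OF CPC pauli_adj[OF assms(2)]])
  have Qc: "Q \<in> carrier_mat (2^t) (2^t)" using pauli_carrier[OF QP] .
  let ?car = "carrier_mat (2^t) (2^t) :: complex mat set"
  have mc: "\<And>A B. A \<in> ?car \<Longrightarrow> B \<in> ?car \<Longrightarrow> A * B \<in> ?car" by simp
  have as: "\<And>A B D. A \<in> ?car \<Longrightarrow> B \<in> ?car \<Longrightarrow> D \<in> ?car \<Longrightarrow> A * B * D = A * (B * D)"
    by simp
  have one_r: "\<And>A. A \<in> ?car \<Longrightarrow> A * 1\<^sub>m (2^t) = A" by simp
  have one_l: "\<And>A. A \<in> ?car \<Longrightarrow> 1\<^sub>m (2^t) * A = A" by simp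
  have ac: "\<And>A. A \<in> ?car \<Longrightarrow> adj A \<in> ?car" by simp
  have adjm: "\<And>A B. A \<in> ?car \<Longrightarrow> B \<in> ?car \<Longrightarrow> adj (A * B) = adj B * adj A"
    by (rule adj_mult) auto
  have sml: "\<And>A B k. A \<in> ?car \<Longrightarrow> B \<in> ?car \<Longrightarrow> (k \<cdot>\<^sub>m A) * B = k \<cdot>\<^sub>m (A * B)"
    by (rule mult_smult_assoc_mat) auto
  have canc: "\<And>X. X \<in> ?car \<Longrightarrow> C * (adj C * X) = X" "\<And>X. X \<in> ?car \<Longrightarrow> adj C * (C * X) = X"
    "\<And>X. X \<in> ?car \<Longrightarrow> P * (adj P * X) = X" "\<And>X. X \<in> ?car \<Longrightarrow> adj P * (P * X) = X"
    using as[OF Cc aCc] as[OF aCc Cc] as[OF Pc aPc] as[OF aPc Pc] CaC aCC PaP aPP one_l by auto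
  note simps = mc as one_r one_l ac adjm canc CaC aCC PaP aPP Cc Pc
  have QPC: "Q * P * C = C * P" unfolding Q_def using Cc Pc by (simp add: simps)
  have blk: "ctrl t C * id_tensor t P = ctrl t Q * id_tensor t P * ctrl t C"
    using ctrl_idt[OF Cc Pc] ctrl_idt[OF Qc Pc] blk_ctrl[OF Pc mult_carrier_mat[OF Qc Pc] Cc] QPC by simp
  obtain s1 where s1: "s1 \<in> {1,-1}" "(C * C) * P = s1 \<cdot>\<^sub>m (P * (C * C))"
    using pauli_comm[OF CC assms(2)] by blast
  obtain s2 where s2: "s2 \<in> {1,-1}" "adj Q = s2 \<cdot>\<^sub>m Q"
    using pauli_adj_sign[OF QP] by blast
  have aQ: "adj Q = P * (C * (adj P * adj C))"
    unfolding Q_def using Cc Pc by (simp add: simps)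
  have Qs: "Q = s2 \<cdot>\<^sub>m adj Q" using s2 by (auto simp: smult_smult_mat)
  have "Q * C = s2 \<cdot>\<^sub>m (adj Q * C)"
    using Qs sml[OF ac[OF Qc] Cc] by metis
  also have "adj Q * C = P * (C * adj P)"
    unfolding aQ using Cc Pc by (simp add: simps)
  finally have QC: "Q * C = s2 \<cdot>\<^sub>m (P * (C * adj P))" .
  have "C * Q = ((C * C) * P) * (adj C * adj P)"
    unfolding Q_def using Cc Pc by (simp add: simps)
  also have "\<dots> = (s1 \<cdot>\<^sub>m (P * (C * C))) * (adj C * adj P)" using s1 by simp
  also have "\<dots> = s1 \<cdot>\<^sub>m ((P * (C * C)) * (adj C * adj P))"
    using Cc Pc by (intro sml) (simp_all add: simps)
  also have "(P * (C * C)) * (adj C * adj P) = P * (C * adj P)"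
    using Cc Pc by (simp add: simps)
  finally have CQ: "C * Q = s1 \<cdot>\<^sub>m (P * (C * adj P))" .
  have "s1 \<cdot>\<^sub>m (C * Q) = (s1 * s1) \<cdot>\<^sub>m (P * (C * adj P))" using CQ by (simp add: smult_smult_mat)
  also have "s1 * s1 = 1" using s1 by auto
  finally have "P * (C * adj P) = s1 \<cdot>\<^sub>m (C * Q)" by simp
  then have QC2: "Q * C = (s2 * s1) \<cdot>\<^sub>m (C * Q)" using QC by (simp add: smult_smult_mat)
  have comm: "Q * C = C * Q \<or> Q * C = - (C * Q)"
    using QC2 s1(1) s2(1) by (auto simp: neg_one_smult)
  have supp: "Supp t Q \<subseteq> Supp t C"
  proof
    fix j assume "j \<in> Supp t Q"
    then have j: "j < t" and nQ: "\<not> acts_trivially_on t j Q" by (auto simp: Supp_def)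
    have "acts_trivially_on t j Q" if tC: "acts_trivially_on t j C"
    proof -
      obtain W where W: "C = tensor_id_at t j W" using tC by (auto simp: acts_trivially_on_def)
      obtain sx where sx: "sx \<in> {1,-1}" "P * Xj t j = sx \<cdot>\<^sub>m (Xj t j * P)"
        using pauli_comm[OF assms(2) Xj_pauli] by blast
      obtain sz where sz: "sz \<in> {1,-1}" "P * Zj t j = sz \<cdot>\<^sub>m (Zj t j * P)"
        using pauli_comm[OF assms(2) Zj_pauli] by blast
      have "Q * Xj t j = Xj t j * Q" unfolding Q_def
        by (rule Q_comm[OF Cc Pc Xj_carrier Xj_adj _ sx]) (use tid_comm[OF j] W in simp)
      moreover have "Q * Zj t j = Zj t j * Q" unfolding Q_def
        by (rule Q_comm[OF Cc Pc Zj_carrier Zj_adj _ sz]) (use tid_comm[OF j] W in simp)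
      ultimately show ?thesis by (rule comm_triv[OF j Qc])
    qed
    then show "j \<in> Supp t C" using j nQ by (auto simp: Supp_def)
  qed
  show ?thesis using QP blk comm supp by blast
qed

end
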